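(* Let $X$ be a $T_1$-space and let $\mathcal{B}$ be a base of $X$ which is regular at non-isolated points. Then the family $\mathcal{B}^{m}=\{P\in\mathcal{B}: \text{if } P\subset Q\in\mathcal{B} \text{ then } Q=P\}$ of maximal members of $\mathcal{B}$ is locally finite at non-isolated points and covers $X\setminus I(X)$.
   Context: $I(X)$ denotes the set of isolated points of $X$. A base $\mathcal{B}$ of $X$ is regular at a point $x$ if for every neighborhood $U$ of $x$ there is an open set $V$ with $x\in V\subset U$ such that $\{B\in\mathcal{B}: B\cap V\neq\emptyset \text{ and } B\not\subset U\}$ is finite. $\mathcal{B}$ is a regular base at non-isolated points if it is regular at every $x\in X\setminus I(X)$. A family $\mathcal{F}$ of subsets of $X$ is locally finite at non-isolated points if every $x\in X\setminus I(X)$ has a neighborhood meeting only finitely many members of $\mathcal{F}$. *)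

theory Defs
  imports "HOL-Analysis.Analysis"
begin

text \<open>Isolated points I(X) of the whole space (the carrier is the type universe).\<close>
definition isolated_points :: "'a::topological_space set" where
  "isolated_points = {x. open {x}}"

definition regular_at :: "'a::topological_space set set \<Rightarrow> 'a \<Rightarrow> bool" where
  "regular_at \<B> x \<longleftrightarrow>
     (\<forall>U. open U \<and> x \<in> U \<longrightarrow>
        (\<exists>V. open V \<and> x \<in> V \<and> V \<subseteq> U \<and>
             finite {B \<in> \<B>. B \<inter> V \<noteq> {} \<and> \<not> B \<subseteq> U}))"

definition regular_base_nonisolated :: "'a::topological_space set set \<Rightarrow> bool" where
  "regular_base_nonisolated \<B> \<longleftrightarrow>
     topological_basis \<B> \<and> (\<forall>x. x \<notin> isolated_points \<longrightarrow> regular_at \<B> x)"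

definition locally_finite_nonisolated :: "'a::topological_space set set \<Rightarrow> bool" where
  "locally_finite_nonisolated \<F> \<longleftrightarrow>
     (\<forall>x. x \<notin> isolated_points \<longrightarrow>
        (\<exists>U. open U \<and> x \<in> U \<and> finite {F \<in> \<F>. F \<inter> U \<noteq> {}}))"

definition maximal_members :: "'a set set \<Rightarrow> 'a set set" where
  "maximal_members \<B> = {P \<in> \<B>. \<forall>Q \<in> \<B>. P \<subseteq> Q \<longrightarrow> Q = P}"

end

theory Submission
  imports Defs
begin

theorem mainTheorem1:
  fixes \<B> :: "'a::t1_space set set"
  assumes "regular_base_nonisolated \<B>"
  shows "locally_finite_nonisolated (maximal_members \<B>)
         \<and> UNIV - isolated_points \<subseteq> \<Union>(maximal_members \<B>)"
proof
  have tb: "topological_basis \<B>" and reg: "\<And>x. x \<notin> isolated_points \<Longrightarrow> regular_at \<B> x"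
    using assms unfolding regular_base_nonisolated_def by auto
  have opn: "\<And>b. b \<in> \<B> \<Longrightarrow> open b" using tb topological_basis_open by blast
  show "locally_finite_nonisolated (maximal_members \<B>)"
    unfolding locally_finite_nonisolated_def
  proof (intro allI impI)
    fix x :: 'a assume x: "x \<notin> isolated_points"
    obtain B0 where B0: "B0 \<in> \<B>" "x \<in> B0" using topological_basisE[OF tb open_UNIV, of x] by blast
    obtain V where V: "open V" "x \<in> V" "V \<subseteq> B0"
      "finite {B \<in> \<B>. B \<inter> V \<noteq> {} \<and> \<not> B \<subseteq> B0}"
      using reg[OF x] B0 opn unfolding regular_at_def by blast
    have "{F \<in> maximal_members \<B>. F \<inter> V \<noteq> {}} \<subseteq> insert B0 {B \<in> \<B>. B \<inter> V \<noteq> {} \<and> \<not> B \<subseteq> B0}"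
      using B0 unfolding maximal_members_def by blast
    hence "finite {F \<in> maximal_members \<B>. F \<inter> V \<noteq> {}}" using V(4) finite_subset by blast
    thus "\<exists>U. open U \<and> x \<in> U \<and> finite {F \<in> maximal_members \<B>. F \<inter> U \<noteq> {}}"
      using V by blast
  qed
  show "UNIV - isolated_points \<subseteq> \<Union>(maximal_members \<B>)"
  proof
    fix x :: 'a assume "x \<in> UNIV - isolated_points"
    hence x: "x \<notin> isolated_points" by simp
    obtain B0 where B0: "B0 \<in> \<B>" "x \<in> B0" using topological_basisE[OF tb open_UNIV, of x] by blast
    obtain V where V: "open V" "x \<in> V" "V \<subseteq> B0"
      "finite {B \<in> \<B>. B \<inter> V \<noteq> {} \<and> \<not> B \<subseteq> B0}"
      using reg[OF x] B0 opn unfolding regular_at_def by blast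
    have "{Q \<in> \<B>. B0 \<subseteq> Q} \<subseteq> insert B0 {B \<in> \<B>. B \<inter> V \<noteq> {} \<and> \<not> B \<subseteq> B0}"
      using V by blast
    hence fin: "finite {Q \<in> \<B>. B0 \<subseteq> Q}" using V(4) finite_subset by blast
    have ne: "{Q \<in> \<B>. B0 \<subseteq> Q} \<noteq> {}" using B0 by blast
    obtain m where m: "m \<in> {Q \<in> \<B>. B0 \<subseteq> Q}"
      "\<forall>b\<in>{Q \<in> \<B>. B0 \<subseteq> Q}. m \<le> b \<longrightarrow> m = b"
      using finite_has_maximal[OF fin ne] by blast
    have "m \<in> maximal_members \<B>"
      unfolding maximal_members_def using m by auto
    thus "x \<in> \<Union>(maximal_members \<B>)" using m B0 by blast
  qed
qed

end
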